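(* For any American option $\xi$ and any mixed stopping time $\chi\in\mathcal{X}$, \[ \{-x\in\mathbb{R}^d:\exists y\in\Phi,\ (y,\chi)\in\Phi^{\mathrm{bg}}(\xi),\ x=y_0\}=\{-x\in\mathbb{R}^d:\exists z\in\Psi^{\mathrm{a}}(-\xi_\chi),\ x=z_0\}. \]
   Context: Finite filtered probability space $(\Omega,\mathcal{F},\mathbb{P};(\mathcal{F}_t)_{t=0}^T)$, $\mathcal{F}_0$ trivial, $\mathcal{F}_T=2^\Omega$, $\mathbb{P}(\{\omega\})>0$. $\mathcal{L}_t$: $\mathcal{F}_t$-measurable $\mathbb{R}^d$-valued random variables. $d$ assets, $\mathcal{F}_t$-measurable exchange rates $\pi^{jk}_t>0$, $\pi^{jj}_t=1$. Solvency cone $\mathcal{K}_t$: $x\in\mathcal{L}_t$ with $x(\omega)$ in the convex cone generated by $e^1,\ldots,e^d$ and $\pi^{jk}_t(\omega)e^j-e^k$ for all $\omega$. Trading strategies $\Phi$: $y=(y_t)_{t=0}^{T+1}$, $y_0\in\mathbb{R}^d$, $y_t\in\mathcal{L}_{t-1}$ ($t=1,\ldots,T$), $y_{T+1}=0$. Mixed stopping times $\mathcal{X}$: adapted $[0,1]$-valued $\chi$ with $\sum_{t=0}^T\chi_t=1$; $\xi_\chi=\sum_{t=0}^T\chi_t\xi_t\in\mathcal{L}_T$. American option: adapted $\mathbb{R}^d$-valued $\xi=(\xi_t)_{t=0}^T$. $\Phi^{\mathrm{bg}}(\xi)$: pairs $(y,\chi)\in\Phi\times\mathcal{X}$ with $y_t+\chi_t\xi_t-y_{t+1}\in\mathcal{K}_t$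 for each $t=0,\ldots,T$. For $\zeta\in\mathcal{L}_T$, $\Psi^{\mathrm{a}}(\zeta)$ is the set of $y\in\Phi$ with $y_t-y_{t+1}\in\mathcal{K}_t$ for $t=0,\ldots,T-1$ and $y_T-\zeta\in\mathcal{K}_T$. Standing assumption: no arbitrage (no $y\in\Phi$ with $y_0=0$, $y_t-y_{t+1}\in\mathcal{K}_t$ for $t<T$ and $y_T-x\in\mathcal{K}_T$ for a nonzero componentwise non-negative $x\in\mathcal{L}_T$). *)

theory Defs
  imports "HOL-Analysis.Analysis"
begin

text \<open>Vectors of d assets are elements of real ^ 'd.\<close>

definition finite_filtered_space :: "('a::finite \<Rightarrow> real) \<Rightarrow> (nat \<Rightarrow> 'a set set) \<Rightarrow> nat \<Rightarrow> bool" where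
  "finite_filtered_space P F T \<longleftrightarrow>
     (\<forall>\<omega>. P \<omega> > 0) \<and> (\<Sum>\<omega>\<in>UNIV. P \<omega>) = 1 \<and>
     (\<forall>t\<le>T. sigma_algebra UNIV (F t)) \<and>
     (\<forall>t<T. F t \<subseteq> F (Suc t)) \<and>
     F 0 = {{}, UNIV} \<and> F T = Pow UNIV"

definition meas :: "(nat \<Rightarrow> 'a set set) \<Rightarrow> nat \<Rightarrow> ('a \<Rightarrow> 'b::topological_space) \<Rightarrow> bool" where
  "meas F t f \<longleftrightarrow> f \<in> measurable (sigma UNIV (F t)) borel"

definition exchange_rates :: "(nat \<Rightarrow> 'a set set) \<Rightarrow> nat \<Rightarrow> (nat \<Rightarrow> 'd \<Rightarrow> 'd \<Rightarrow> 'a \<Rightarrow> real) \<Rightarrow> bool" where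
  "exchange_rates F T \<pi> \<longleftrightarrow>
     (\<forall>t\<le>T. \<forall>j k. meas F t (\<pi> t j k) \<and> (\<forall>\<omega>. \<pi> t j k \<omega> > 0)) \<and>
     (\<forall>t\<le>T. \<forall>j \<omega>. \<pi> t j j \<omega> = 1)"

definition cone_gens :: "(nat \<Rightarrow> 'd \<Rightarrow> 'd \<Rightarrow> 'a \<Rightarrow> real) \<Rightarrow> nat \<Rightarrow> 'a \<Rightarrow> (real ^ 'd::finite) set" where
  "cone_gens \<pi> t \<omega> = {axis j 1 | j. True} \<union> {\<pi> t j k \<omega> *\<^sub>R axis j 1 - axis k 1 | j k. True}"

definition in_K :: "(nat \<Rightarrow> 'a set set) \<Rightarrow> (nat \<Rightarrow> 'd \<Rightarrow> 'd \<Rightarrow> 'a \<Rightarrow> real) \<Rightarrow> nat \<Rightarrow> ('a \<Rightarrow> real ^ 'd::finite) \<Rightarrow> bool" where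
  "in_K F \<pi> t x \<longleftrightarrow> meas F t x \<and> (\<forall>\<omega>. x \<omega> \<in> convex_cone hull (cone_gens \<pi> t \<omega>))"

definition strategies :: "(nat \<Rightarrow> 'a set set) \<Rightarrow> nat \<Rightarrow> (nat \<Rightarrow> 'a \<Rightarrow> real ^ 'd::finite) set" where
  "strategies F T = {y. (\<exists>v. \<forall>\<omega>. y 0 \<omega> = v) \<and> (\<forall>t\<in>{1..T}. meas F (t - 1) (y t)) \<and>
                        (\<forall>t>T. \<forall>\<omega>. y t \<omega> = 0)}"

definition mixed_stopping_times :: "(nat \<Rightarrow> 'a set set) \<Rightarrow> nat \<Rightarrow> (nat \<Rightarrow> 'a \<Rightarrow> real) set" where
  "mixed_stopping_times F T = {c. (\<forall>t\<le>T. meas F t (c t) \<and> (\<forall>\<omega>. 0 \<le> c t \<omega> \<and> c t \<omega> \<le> 1)) \<and>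
                                   (\<forall>\<omega>. (\<Sum>t\<le>T. c t \<omega>) = 1)}"

definition stopped_payoff :: "nat \<Rightarrow> (nat \<Rightarrow> 'a \<Rightarrow> real) \<Rightarrow> (nat \<Rightarrow> 'a \<Rightarrow> real ^ 'd::finite) \<Rightarrow> 'a \<Rightarrow> real ^ 'd" where
  "stopped_payoff T c \<xi> = (\<lambda>\<omega>. \<Sum>t\<le>T. c t \<omega> *\<^sub>R \<xi> t \<omega>)"

definition american_option :: "(nat \<Rightarrow> 'a set set) \<Rightarrow> nat \<Rightarrow> (nat \<Rightarrow> 'a \<Rightarrow> real ^ 'd::finite) \<Rightarrow> bool" where
  "american_option F T \<xi> \<longleftrightarrow> (\<forall>t\<le>T. meas F t (\<xi> t))"

definition Phi_bg :: "(nat \<Rightarrow> 'a set set) \<Rightarrow> (nat \<Rightarrow> 'd \<Rightarrow> 'd \<Rightarrow> 'a \<Rightarrow> real) \<Rightarrow> nat \<Rightarrow>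
    (nat \<Rightarrow> 'a \<Rightarrow> real ^ 'd::finite) \<Rightarrow> ((nat \<Rightarrow> 'a \<Rightarrow> real ^ 'd) \<times> (nat \<Rightarrow> 'a \<Rightarrow> real)) set" where
  "Phi_bg F \<pi> T \<xi> = {(y, c). y \<in> strategies F T \<and> c \<in> mixed_stopping_times F T \<and>
      (\<forall>t\<le>T. in_K F \<pi> t (\<lambda>\<omega>. y t \<omega> + c t \<omega> *\<^sub>R \<xi> t \<omega> - y (Suc t) \<omega>))}"

definition Psi_a :: "(nat \<Rightarrow> 'a set set) \<Rightarrow> (nat \<Rightarrow> 'd \<Rightarrow> 'd \<Rightarrow> 'a \<Rightarrow> real) \<Rightarrow> nat \<Rightarrow>
    ('a \<Rightarrow> real ^ 'd::finite) \<Rightarrow> (nat \<Rightarrow> 'a \<Rightarrow> real ^ 'd) set" where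
  "Psi_a F \<pi> T \<zeta> = {y. y \<in> strategies F T \<and>
      (\<forall>t<T. in_K F \<pi> t (\<lambda>\<omega>. y t \<omega> - y (Suc t) \<omega>)) \<and>
      in_K F \<pi> T (\<lambda>\<omega>. y T \<omega> - \<zeta> \<omega>)}"

definition no_arbitrage :: "(nat \<Rightarrow> 'a set set) \<Rightarrow> (nat \<Rightarrow> 'd::finite \<Rightarrow> 'd \<Rightarrow> 'a \<Rightarrow> real) \<Rightarrow> nat \<Rightarrow> bool" where
  "no_arbitrage F \<pi> T \<longleftrightarrow>
     \<not> (\<exists>(y :: nat \<Rightarrow> 'a \<Rightarrow> real ^ 'd) x. y \<in> Psi_a F \<pi> T x \<and> (\<forall>\<omega>. y 0 \<omega> = 0) \<and>
          meas F T x \<and> (\<forall>\<omega> j. 0 \<le> x \<omega> $ j) \<and> x \<noteq> (\<lambda>\<omega>. 0))"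

end

theory Submission
  imports Defs
begin

lemma meas_mono:
  assumes "F s \<subseteq> F t" "meas F s f"
  shows "meas F t f"
proof -
  have "measurable (sigma UNIV (F s)) (borel :: 'b::topological_space measure)
        \<subseteq> measurable (sigma UNIV (F t)) borel"
    by (rule measurable_mono) (auto simp: sets_measure_of space_measure_of_conv
        intro!: sigma_sets_subseteq assms(1))
  then show ?thesis using assms(2) unfolding meas_def by blast
qed

lemma filt_mono:
  assumes "\<forall>t<T. F t \<subseteq> F (Suc t)" "s \<le> t" "t \<le> T"
  shows "F s \<subseteq> F t"
  using assms(2,3)
proof (induction t)
  case 0 then show ?case by simp
next
  case (Suc t)
  show ?case
  proof (cases "s = Suc t")
    case False
    then have "F s \<subseteq> F t" using Suc by simp
    also have "F t \<subseteq> F (Suc t)" using assms(1) Suc by simp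
    finally show ?thesis .
  qed simp
qed

lemma S_meas:
  fixes \<xi> :: "nat \<Rightarrow> 'a \<Rightarrow> real ^ 'd::finite"
  assumes fm: "\<forall>t<T. F t \<subseteq> F (Suc t)"
    and xi: "american_option F T \<xi>"
    and c: "c \<in> mixed_stopping_times F T"
    and t: "t \<in> {1..T}"
  shows "meas F (t - 1) (\<lambda>\<omega>. \<Sum>s<t. c s \<omega> *\<^sub>R \<xi> s \<omega>)"
  unfolding meas_def
proof (rule borel_measurable_sum)
  fix s assume "s \<in> {..<t}"
  then have s: "s \<le> t - 1" "t - 1 \<le> T" using t by auto
  have sT: "s \<le> T" using s by simp
  have "meas F s (c s)" "meas F s (\<xi> s)"
    using c xi sT unfolding mixed_stopping_times_def american_option_def by auto
  then have "meas F (t-1) (c s)" "meas F (t-1) (\<xi> s)"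
    using meas_mono[OF filt_mono[OF fm s]] by auto
  then show "(\<lambda>\<omega>. c s \<omega> *\<^sub>R \<xi> s \<omega>) \<in> borel_measurable (sigma UNIV (F (t - 1)))"
    unfolding meas_def by (rule borel_measurable_scaleR)
qed

lemma meas_add:
  fixes f g :: "'a \<Rightarrow> real ^ 'd::finite"
  shows "meas F t f \<Longrightarrow> meas F t g \<Longrightarrow> meas F t (\<lambda>\<omega>. f \<omega> + g \<omega>)"
    and "meas F t f \<Longrightarrow> meas F t g \<Longrightarrow> meas F t (\<lambda>\<omega>. f \<omega> - g \<omega>)"
  unfolding meas_def by auto

theorem proposition5p5:
  fixes P :: "'a::finite \<Rightarrow> real"
    and F :: "nat \<Rightarrow> 'a set set"
    and T :: nat
    and \<pi> :: "nat \<Rightarrow> 'd::finite \<Rightarrow> 'd \<Rightarrow> 'a \<Rightarrow> real"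
    and \<xi> :: "nat \<Rightarrow> 'a \<Rightarrow> real ^ 'd"
    and c :: "nat \<Rightarrow> 'a \<Rightarrow> real"
  assumes "finite_filtered_space P F T"
    and "exchange_rates F T \<pi>"
    and "no_arbitrage F \<pi> T"
    and "american_option F T \<xi>"
    and "c \<in> mixed_stopping_times F T"
  shows "{- x | x :: real ^ 'd. \<exists>y. (y, c) \<in> Phi_bg F \<pi> T \<xi> \<and> (\<forall>\<omega>. y 0 \<omega> = x)}
       = {- x | x :: real ^ 'd. \<exists>z \<in> Psi_a F \<pi> T (\<lambda>\<omega>. - stopped_payoff T c \<xi> \<omega>). \<forall>\<omega>. z 0 \<omega> = x}"
proof -
  have fm: "\<forall>t<T. F t \<subseteq> F (Suc t)" using assms(1) by (simp add: finite_filtered_space_def)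
  define S where "S t \<omega> = (\<Sum>s<t. c s \<omega> *\<^sub>R \<xi> s \<omega>)" for t \<omega>
  have Sm: "meas F (t - 1) (S t)" if "t \<in> {1..T}" for t
    using S_meas[OF fm assms(4) assms(5) that] unfolding S_def[abs_def] .
  have SSuc: "S (Suc t) \<omega> = S t \<omega> + c t \<omega> *\<^sub>R \<xi> t \<omega>" for t \<omega>
    unfolding S_def by simp
  have Sfin: "stopped_payoff T c \<xi> \<omega> = S T \<omega> + c T \<omega> *\<^sub>R \<xi> T \<omega>" for \<omega>
    unfolding stopped_payoff_def S_def lessThan_Suc_atMost[symmetric] sum.lessThan_Suc by simp
  have S0: "S 0 \<omega> = 0" for \<omega> unfolding S_def by simp
  have A: "\<exists>z \<in> Psi_a F \<pi> T (\<lambda>\<omega>. - stopped_payoff T c \<xi> \<omega>). \<forall>\<omega>. z 0 \<omega> = x"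
    if "(y, c) \<in> Phi_bg F \<pi> T \<xi>" "\<forall>\<omega>. y 0 \<omega> = x" for y x
  proof -
    define z where "z t \<omega> = (if t \<le> T then y t \<omega> - S t \<omega> else 0)" for t \<omega>
    have ys: "y \<in> strategies F T" and yK: "\<forall>t\<le>T. in_K F \<pi> t (\<lambda>\<omega>. y t \<omega> + c t \<omega> *\<^sub>R \<xi> t \<omega> - y (Suc t) \<omega>)"
      using that(1) unfolding Phi_bg_def by auto
    have "z \<in> strategies F T"
      unfolding strategies_def
    proof (intro CollectI conjI ballI allI impI)
      show "\<exists>v. \<forall>\<omega>. z 0 \<omega> = v" using that(2) by (auto simp: z_def S0)
      fix t assume t: "t \<in> {1..T}"
      then have "meas F (t-1) (\<lambda>\<omega>. y t \<omega> - S t \<omega>)"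
        using ys Sm[OF t] unfolding strategies_def by (intro meas_add(2)) auto
      then show "meas F (t - 1) (z t)" using t unfolding z_def[abs_def] by simp
    next
      fix t \<omega> assume "T < t" then show "z t \<omega> = 0" by (simp add: z_def)
    qed
    moreover have "in_K F \<pi> t (\<lambda>\<omega>. z t \<omega> - z (Suc t) \<omega>)" if "t < T" for t
    proof -
      have "(\<lambda>\<omega>. z t \<omega> - z (Suc t) \<omega>) = (\<lambda>\<omega>. y t \<omega> + c t \<omega> *\<^sub>R \<xi> t \<omega> - y (Suc t) \<omega>)"
        using that by (auto simp: z_def SSuc algebra_simps)
      then show ?thesis using yK that by simp
    qed
    moreover have "in_K F \<pi> T (\<lambda>\<omega>. z T \<omega> - - stopped_payoff T c \<xi> \<omega>)"
    proof -
      have "y (Suc T) \<omega> = 0" for \<omega> using ys unfolding strategies_def by auto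
      then have "(\<lambda>\<omega>. z T \<omega> - - stopped_payoff T c \<xi> \<omega>) = (\<lambda>\<omega>. y T \<omega> + c T \<omega> *\<^sub>R \<xi> T \<omega> - y (Suc T) \<omega>)"
        by (auto simp: z_def Sfin algebra_simps)
      then show ?thesis using yK by simp
    qed
    moreover have "\<forall>\<omega>. z 0 \<omega> = x" using that(2) by (simp add: z_def S0)
    ultimately show ?thesis unfolding Psi_a_def by blast
  qed
  have B: "\<exists>y. (y, c) \<in> Phi_bg F \<pi> T \<xi> \<and> (\<forall>\<omega>. y 0 \<omega> = x)"
    if "z \<in> Psi_a F \<pi> T (\<lambda>\<omega>. - stopped_payoff T c \<xi> \<omega>)" "\<forall>\<omega>. z 0 \<omega> = x" for z x
  proof -
    define y where "y t \<omega> = (if t \<le> T then z t \<omega> + S t \<omega> else 0)" for t \<omega>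
    have zs: "z \<in> strategies F T" and zK: "\<forall>t<T. in_K F \<pi> t (\<lambda>\<omega>. z t \<omega> - z (Suc t) \<omega>)"
      and zT: "in_K F \<pi> T (\<lambda>\<omega>. z T \<omega> - - stopped_payoff T c \<xi> \<omega>)"
      using that(1) unfolding Psi_a_def by auto
    have "y \<in> strategies F T"
      unfolding strategies_def
    proof (intro CollectI conjI ballI allI impI)
      show "\<exists>v. \<forall>\<omega>. y 0 \<omega> = v" using that(2) by (auto simp: y_def S0)
      fix t assume t: "t \<in> {1..T}"
      then have "meas F (t-1) (\<lambda>\<omega>. z t \<omega> + S t \<omega>)"
        using zs Sm[OF t] unfolding strategies_def by (intro meas_add(1)) auto
      then show "meas F (t - 1) (y t)" using t unfolding y_def[abs_def] by simp
    next
      fix t \<omega> assume "T < t" then show "y t \<omega> = 0" by (simp add: y_def)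
    qed
    moreover have "in_K F \<pi> t (\<lambda>\<omega>. y t \<omega> + c t \<omega> *\<^sub>R \<xi> t \<omega> - y (Suc t) \<omega>)" if "t \<le> T" for t
    proof (cases "t < T")
      case True
      have "(\<lambda>\<omega>. y t \<omega> + c t \<omega> *\<^sub>R \<xi> t \<omega> - y (Suc t) \<omega>) = (\<lambda>\<omega>. z t \<omega> - z (Suc t) \<omega>)"
        using True by (auto simp: y_def SSuc algebra_simps)
      then show ?thesis using zK True by simp
    next
      case False
      then have tT: "t = T" using that by simp
      have "(\<lambda>\<omega>. y t \<omega> + c t \<omega> *\<^sub>R \<xi> t \<omega> - y (Suc t) \<omega>) = (\<lambda>\<omega>. z T \<omega> - - stopped_payoff T c \<xi> \<omega>)"
        using tT by (auto simp: y_def Sfin algebra_simps)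
      then show ?thesis using zT tT by simp
    qed
    moreover have "\<forall>\<omega>. y 0 \<omega> = x" using that(2) by (simp add: y_def S0)
    ultimately show ?thesis using assms(5) unfolding Phi_bg_def by blast
  qed
  have eq: "(\<exists>y. (y, c) \<in> Phi_bg F \<pi> T \<xi> \<and> (\<forall>\<omega>. y 0 \<omega> = x)) \<longleftrightarrow>
     (\<exists>z \<in> Psi_a F \<pi> T (\<lambda>\<omega>. - stopped_payoff T c \<xi> \<omega>). \<forall>\<omega>. z 0 \<omega> = x)" for x
  proof
    assume "\<exists>y. (y, c) \<in> Phi_bg F \<pi> T \<xi> \<and> (\<forall>\<omega>. y 0 \<omega> = x)"
    then obtain y where "(y, c) \<in> Phi_bg F \<pi> T \<xi>" "\<forall>\<omega>. y 0 \<omega> = x" by blast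
    then show "\<exists>z \<in> Psi_a F \<pi> T (\<lambda>\<omega>. - stopped_payoff T c \<xi> \<omega>). \<forall>\<omega>. z 0 \<omega> = x" by (rule A)
  next
    assume "\<exists>z \<in> Psi_a F \<pi> T (\<lambda>\<omega>. - stopped_payoff T c \<xi> \<omega>). \<forall>\<omega>. z 0 \<omega> = x"
    then obtain z where "z \<in> Psi_a F \<pi> T (\<lambda>\<omega>. - stopped_payoff T c \<xi> \<omega>)" "\<forall>\<omega>. z 0 \<omega> = x" by blast
    then show "\<exists>y. (y, c) \<in> Phi_bg F \<pi> T \<xi> \<and> (\<forall>\<omega>. y 0 \<omega> = x)" by (rule B)
  qed
  show ?thesis by (simp only: eq)
qed

end
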